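(* Let $f,h,a,b$ be as follows: $f:\mathbb R\times\mathbb C^n\to\mathbb R$ smooth with $f(x,z)=|z|^2+O(|x||z|+|z|^3)$ near $0$; $h:\mathbb C^n\to\mathbb R$ smooth with $h(\zeta)=O(|\zeta|^3)$; $a,b:[0,\infty)\times\mathbb C^n\to\mathbb C^n$ smooth; $v\cdot w$ the real Euclidean inner product on $\mathbb C^n\cong\mathbb R^{2n}$. For $\tau>0$ and a ball $B=\{|\zeta|<r_0\}$ set $$J(s)=\int_B\frac{d\zeta}{\big[(f(h(\zeta),\zeta)+s(1+\zeta\cdot b(s,\zeta)))-i(h(\zeta)+s\,\zeta\cdot a(s,\zeta))\big]^\tau},$$ using the principal branch of $w\mapsto w^\tau$. Then, for $r_0$ small enough, the bracket has positive real part for $(s,\zeta)\ne(0,0)$, and there exist $C'>0$ and $s_0>0$ such that for $0<s<s_0$ $$\mathrm{Re}\,J(s)\ \ge\ C'\int_0^{r_0}\frac{r^{2n-1}}{(s+r^2)^\tau}\,dr .$$ In particular, if $\tau\ge n$ then $\mathrm{Re}\,J(s)\to+\infty$ as $s\to0^+$. *)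

theory Defs
  imports "HOL-Analysis.Analysis" "HOL-Library.Landau_Symbols"
begin

definition dir_deriv :: "'a::real_normed_vector set \<Rightarrow> 'a \<Rightarrow> ('a \<Rightarrow> 'b::real_normed_vector) \<Rightarrow> 'a \<Rightarrow> 'b"
  where "dir_deriv S v g = (\<lambda>y. frechet_derivative g (at y within S) v)"

text \<open>C-infinity on S: every iterated directional derivative exists (Frechet differentiable
  within S) at every point of S.  This implies all Frechet derivatives of all orders exist
  and are continuous.\<close>
definition smooth_on :: "'a::real_normed_vector set \<Rightarrow> ('a \<Rightarrow> 'b::real_normed_vector) \<Rightarrow> bool"
  where "smooth_on S f \<longleftrightarrow>
     (\<forall>vs::'a list. \<forall>x\<in>S. fold (dir_deriv S) vs f differentiable (at x within S))"

end

theory Submission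
  imports Defs
begin

lemma cont_int: fixes f :: "'a::euclidean_space \<Rightarrow> 'b::euclidean_space"
 assumes "compact K" "continuous_on K f" "S \<subseteq> K" "S \<in> sets lborel"
 shows "f integrable_on S"
proof -
  have "integrable lborel (\<lambda>x. indicator K x *\<^sub>R f x)" by (rule borel_integrable_compact[OF assms(1,2)])
  hence "set_integrable lborel K f" by (simp add: set_integrable_def)
  hence "set_integrable lborel S f" using set_integrable_subset assms by blast
  thus ?thesis by (rule set_borel_integral_eq_integral(1))
qed

lemma int_lower: fixes f :: "'a::euclidean_space \<Rightarrow> real"
  assumes "f integrable_on S" "S \<in> sets lborel" "bounded S" "\<forall>x\<in>S. c0 \<le> f x"
  shows "c0 * measure lborel S \<le> integral S f"
proof -
  have lm: "S \<in> lmeasurable" using assms(2,3)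
    by (simp add: bounded_set_imp_lmeasurable sets_completionI_sets)
  have "integral S (\<lambda>x. c0) \<le> integral S f"
    by (rule integral_le[OF integrable_on_const[OF lm] assms(1)]) (use assms(4) in auto)
  moreover have "integral S (\<lambda>x. c0) = c0 * integral S (\<lambda>x. 1::real)"
    using integral_mult_right[of S c0 "\<lambda>x. 1::real"] by simp
  moreover have "integral S (\<lambda>x. 1::real) = measure lborel S"
    using lmeasure_integral[OF lm] assms(2) by simp
  ultimately show ?thesis by simp
qed

lemma radial_cmp:
  fixes s \<tau> \<rho> :: real
  assumes s: "s > 0" and tau: "\<tau> > 0" and rho: "\<rho> > 0"
  shows "unit_ball_vol DIM('a) / 4 powr \<tau> * integral {0..\<rho>} (\<lambda>r. r^(DIM('a)-1) / (s+r\<^sup>2) powr \<tau>)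
         \<le> integral (ball (0::'a::euclidean_space) \<rho>) (\<lambda>\<zeta>. 1/(s + (norm \<zeta>)\<^sup>2) powr \<tau>)"
proof -
  define m where "m = DIM('a)"
  have m1: "m \<ge> 1" unfolding m_def using DIM_positive by (simp add: Suc_le_eq)
  have sp: "s + r\<^sup>2 > 0" for r using s by (simp add: add_pos_nonneg)
  have sp': "s + r\<^sup>2 \<noteq> 0" for r using sp[of r] by simp
  define \<phi> where "\<phi> = (\<lambda>r::real. 1/(s+r\<^sup>2) powr \<tau>)"
  define g where "g = (\<lambda>r::real. r^(m-1) / (s+r\<^sup>2) powr \<tau>)"
  define \<omega> where "\<omega> = unit_ball_vol m"
  define c where "c = \<omega> / 4 powr \<tau>"
  define I where "I = (\<lambda>\<rho>. integral {0..\<rho>} g)"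
  define G where "G = (\<lambda>\<rho>. integral (ball (0::'a) \<rho>) (\<lambda>\<zeta>. \<phi> (norm \<zeta>)))"
  have om: "\<omega> > 0" unfolding \<omega>_def by simp
  have phipos: "\<phi> r > 0" for r
  proof -
    have "s + r\<^sup>2 > 0" using s by (simp add: sp sp')
    thus ?thesis unfolding \<phi>_def by simp
  qed
  have phimono: "\<phi> y \<le> \<phi> x" if "0 \<le> x" "x \<le> y" for x y
  proof -
    have "(s + x\<^sup>2) powr \<tau> \<le> (s + y\<^sup>2) powr \<tau>"
      by (rule powr_mono2) (use that s tau in \<open>auto intro: power_mono\<close>)
    moreover have "(s + x\<^sup>2) powr \<tau> > 0" using s by (simp add: sp sp')
    ultimately show ?thesis unfolding \<phi>_def by (simp add: frac_le)
  qed
  have phi4: "\<phi> (r/2) \<le> 4 powr \<tau> * \<phi> r" for r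
  proof -
    have "(s + r\<^sup>2) powr \<tau> \<le> (4 * (s + (r/2)\<^sup>2)) powr \<tau>"
      by (rule powr_mono2) (use s tau in \<open>auto simp: power_divide sp sp'\<close>)
    also have "\<dots> = 4 powr \<tau> * (s + (r/2)\<^sup>2) powr \<tau>"
      using sp[of "r/2"] powr_mult[of 4 "s + (r/2)\<^sup>2" \<tau>] by (simp del: distrib_left_numeral)
    finally have *: "(s + r\<^sup>2) powr \<tau> \<le> 4 powr \<tau> * (s + (r/2)\<^sup>2) powr \<tau>" .
    have p1: "(s + (r/2)\<^sup>2) powr \<tau> > 0" using s by (simp add: sp sp')
    have p2: "(s + r\<^sup>2) powr \<tau> > 0" using s by (simp add: sp sp')
    show ?thesis unfolding \<phi>_def using * p1 p2 by (simp add: field_simps)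
  qed
  have contphi: "continuous_on UNIV (\<lambda>\<zeta>::'a. \<phi> (norm \<zeta>))"
    unfolding \<phi>_def using s
    by (intro continuous_intros) (auto simp: sp sp')
  have contg: "continuous_on UNIV g"
    unfolding g_def using s
    by (intro continuous_intros) (auto simp: sp sp')
  have gint: "g integrable_on {a..b}" for a b
    by (rule integrable_continuous_interval) (use contg continuous_on_subset in blast)
  have Gint: "(\<lambda>\<zeta>::'a. \<phi> (norm \<zeta>)) integrable_on S" if "S \<subseteq> ball 0 r" "S \<in> sets lborel" for S r
    by (rule cont_int[of "cball 0 r"]) (use that contphi in \<open>auto intro: continuous_on_subset\<close>)
  have cball: "measure lborel (ball (0::'a) r) = \<omega> * r ^ m" if "r \<ge> 0" for r
    unfolding \<omega>_def m_def using content_ball[where 'a='a, OF that, of 0] by simp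
  have gle: "g r \<le> b ^ (m-1) * \<phi> a" if "0 \<le> a" "a \<le> r" "r \<le> b" for a r b
  proof -
    have "r ^ (m-1) \<le> b ^ (m-1)" by (rule power_mono) (use that in auto)
    moreover have "\<phi> r \<le> \<phi> a" by (rule phimono) (use that in auto)
    ultimately have "r^(m-1) * \<phi> r \<le> b^(m-1) * \<phi> a"
      using that phipos by (intro mult_mono) (auto intro: less_imp_le)
    thus ?thesis unfolding g_def \<phi>_def by simp
  qed
  have intg_le: "integral {a..b} g \<le> (b - a) * (b ^ (m-1) * \<phi> a)" if "0 \<le> a" "a \<le> b" for a b
  proof -
    have "integral {a..b} g \<le> integral {a..b} (\<lambda>_. b ^ (m-1) * \<phi> a)"
      by (rule integral_le[OF gint]) (use that gle in auto)
    moreover have "integral {a..b} (\<lambda>_. b ^ (m-1) * \<phi> a) = (b - a) * (b ^ (m-1) * \<phi> a)"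
      using that by (simp only: integral_const_real content_real_eq_0 real_scaleR_def) (simp add: content_real)
    ultimately show ?thesis by linarith
  qed
  have main: "\<forall>r. 0 < r \<and> r \<le> 2^K * sqrt s \<longrightarrow> c * I r \<le> G r" for K :: nat
  proof (induction K)
    case 0
    show ?case
    proof (intro allI impI)
      fix r assume r: "0 < r \<and> r \<le> 2^0 * sqrt s"
      hence r2: "r\<^sup>2 \<le> s" using s by (metis mult_1 power2_le_iff_abs_le power_0 real_sqrt_ge_zero real_sqrt_pow2 less_imp_le abs_of_nonneg)
      have "I r \<le> r * (r^(m-1) * \<phi> 0)" unfolding I_def using intg_le[of 0 r] r by simp
      also have "\<dots> = r^m / s powr \<tau>" unfolding \<phi>_def using m1
        by (simp add: power_eq_if[of r m])
      finally have Ile: "I r \<le> r^m / s powr \<tau>" .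
      have "\<phi> r * measure lborel (ball (0::'a) r) \<le> G r" unfolding G_def
        by (rule int_lower) (use Gint[of "ball 0 r" r] r in \<open>auto intro!: phimono\<close>)
      hence Gge: "\<omega> * r^m * \<phi> r \<le> G r" using cball[of r] r by (simp add: mult_ac)
      have "\<phi> r \<ge> 1 / (2 * s) powr \<tau>"
      proof -
        have "(s + r\<^sup>2) powr \<tau> \<le> (2 * s) powr \<tau>"
          by (rule powr_mono2) (use s tau r2 in auto)
        thus ?thesis unfolding \<phi>_def using s by (simp add: frac_le sp sp')
      qed
      moreover have "(2 * s) powr \<tau> \<le> 4 powr \<tau> * s powr \<tau>"
      proof -
        have "(2 * s) powr \<tau> = 2 powr \<tau> * s powr \<tau>" using s by (simp add: powr_mult)
        moreover have "2 powr \<tau> \<le> 4 powr \<tau>" using tau by (simp add: powr_mono2)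
        ultimately show ?thesis using s by simp
      qed
      ultimately have "1 / (4 powr \<tau> * s powr \<tau>) \<le> \<phi> r"
        using s by (smt (verit) frac_le powr_gt_zero)
      hence "c * (r^m / s powr \<tau>) \<le> \<omega> * r^m * \<phi> r"
      proof -
        assume h: "1 / (4 powr \<tau> * s powr \<tau>) \<le> \<phi> r"
        have "c * (r^m / s powr \<tau>) = (\<omega> * r^m) * (1 / (4 powr \<tau> * s powr \<tau>))"
          unfolding c_def by simp
        also have "\<dots> \<le> (\<omega> * r^m) * \<phi> r"
          by (rule mult_left_mono[OF h]) (use om r in simp)
        finally show ?thesis .
      qed
      moreover have "c * I r \<le> c * (r^m / s powr \<tau>)"
        by (rule mult_left_mono[OF Ile]) (use om in \<open>simp add: c_def\<close>)
      ultimately show "c * I r \<le> G r" using Gge by linarith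
    qed
  next
    case (Suc K)
    show ?case
    proof (intro allI impI)
      fix r assume r: "0 < r \<and> r \<le> 2^Suc K * sqrt s"
      have r': "0 < r/2 \<and> r/2 \<le> 2^K * sqrt s" using r by simp
      have IH: "c * I (r/2) \<le> G (r/2)" using Suc.IH r' by blast
      have Isplit: "I r = I (r/2) + integral {r/2..r} g"
        unfolding I_def using r Henstock_Kurzweil_Integration.integral_combine[where a=0 and c="r/2" and b=r and f=g, OF _ _ gint] by simp
      have "integral {r/2..r} g \<le> (r/2) * (r^(m-1) * \<phi> (r/2))"
        using intg_le[of "r/2" r] r by simp
      also have "\<dots> \<le> (r/2) * (r^(m-1) * (4 powr \<tau> * \<phi> r))"
        using phi4[of r] r by (intro mult_left_mono) auto
      also have "\<dots> = r^m * \<phi> r * 4 powr \<tau> / 2" using m1 by (simp add: power_eq_if[of r m])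
      finally have I2: "integral {r/2..r} g \<le> r^m * \<phi> r * 4 powr \<tau> / 2" .
      define A where "A = ball (0::'a) r - ball 0 (r/2)"
      have Aset: "A \<in> sets lborel" unfolding A_def by auto
      have ballU: "ball (0::'a) r = ball 0 (r/2) \<union> A" unfolding A_def using r by auto
      have Gsplit: "G r = G (r/2) + integral A (\<lambda>\<zeta>. \<phi> (norm \<zeta>))"
        unfolding G_def ballU
      proof (rule integral_Un)
        show "(\<lambda>\<zeta>. \<phi> (norm \<zeta>)) integrable_on ball (0::'a) (r/2)"
          by (rule Gint[of _ r]) (use r in auto)
        show "(\<lambda>\<zeta>. \<phi> (norm \<zeta>)) integrable_on A"
          by (rule Gint[of _ r]) (use Aset in \<open>auto simp: A_def\<close>)
      qed (auto simp: A_def)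
      have cA: "measure lborel A = \<omega> * r^m - \<omega> * (r/2)^m"
      proof -
        have "measure lborel A = measure lborel (ball (0::'a) r) - measure lborel (ball (0::'a) (r/2))"
          unfolding A_def by (rule measure_Diff) (use r emeasure_lborel_ball_finite[of "0::'a" r] in auto)
        thus ?thesis using cball r by simp
      qed
      have "(r/2)^m \<le> r^m / 2"
      proof -
        have "(r/2)^m = r^m / 2^m" by (simp add: power_divide)
        moreover have "(2::real)^m \<ge> 2" using m1 by (metis power_increasing power_one_right one_le_numeral)
        moreover have "r^m / 2^m \<le> r^m / 2"
          by (rule divide_left_mono) (use r \<open>(2::real)^m \<ge> 2\<close> in auto)
        ultimately show ?thesis by simp
      qed
      hence "\<omega> * (r/2)^m \<le> \<omega> * (r^m / 2)" using om by (intro mult_left_mono) auto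
      hence cA2: "measure lborel A \<ge> \<omega> * r^m / 2" using cA by simp
      have "\<phi> r * measure lborel A \<le> integral A (\<lambda>\<zeta>. \<phi> (norm \<zeta>))"
        by (rule int_lower) (use Gint[of A r] Aset r in \<open>auto simp: A_def intro!: phimono\<close>)
      moreover have "\<phi> r * (\<omega> * r^m / 2) \<le> \<phi> r * measure lborel A"
        using cA2 phipos[of r] by (simp add: mult_left_mono)
      ultimately have GA: "\<omega> * r^m * \<phi> r / 2 \<le> integral A (\<lambda>\<zeta>. \<phi> (norm \<zeta>))" by (simp add: mult_ac)
      have "c * integral {r/2..r} g \<le> c * (r^m * \<phi> r * 4 powr \<tau> / 2)"
        by (rule mult_left_mono[OF I2]) (use om in \<open>simp add: c_def\<close>)
      also have "\<dots> = \<omega> * r^m * \<phi> r / 2" unfolding c_def by simp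
      finally have "c * integral {r/2..r} g \<le> \<omega> * r^m * \<phi> r / 2" .
      thus "c * I r \<le> G r" using IH Isplit Gsplit GA by (simp add: distrib_left)
    qed
  qed
  obtain K :: nat where K: "\<rho> / sqrt s < 2^K" using real_arch_pow[of 2 "\<rho>/sqrt s"] by auto
  hence "\<rho> \<le> 2^K * sqrt s" using s by (simp add: field_simps)
  hence "c * I \<rho> \<le> G \<rho>" using main rho by blast
  thus ?thesis unfolding c_def I_def G_def g_def \<phi>_def \<omega>_def m_def by simp
qed


lemma int_inv: assumes "0 < a" "a \<le> b"
  shows "integral {a..b} (\<lambda>r::real. 1 / r) = ln b - ln a"
proof -
  have "((\<lambda>r::real. 1 / r) has_integral (ln b - ln a)) {a..b}"
  proof (rule fundamental_theorem_of_calculus)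
    show "a \<le> b" by fact
    fix x assume x: "x \<in> {a..b}"
    hence "x > 0" using assms by auto
    hence "(ln has_real_derivative 1 / x) (at x within {a..b})"
      by (auto intro!: derivative_eq_intros)
    thus "(ln has_vector_derivative 1 / x) (at x within {a..b})"
      by (simp add: has_real_derivative_iff_has_vector_derivative)
  qed
  thus ?thesis by (rule integral_unique)
qed

lemma lim1: "filterlim (\<lambda>s::real. - ln s / 2) at_top (at_right 0)"
proof -
  have l: "filterlim (\<lambda>s::real. - ln s) at_top (at_right 0)"
    using filterlim_uminus_at_bot ln_at_0 by blast
  have "filterlim (\<lambda>s::real. (1/2) * (- ln s)) at_top (at_right 0)"
    by (rule filterlim_tendsto_pos_mult_at_top[OF tendsto_const _ l]) simp
  thus ?thesis by simp
qed

lemma I_diverge: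
  fixes \<tau> r0 :: real and m :: nat
  assumes r0: "0 < r0" "r0 \<le> 1" and m: "m \<ge> 1" and tau: "real m \<le> 2 * \<tau>"
  shows "filterlim (\<lambda>s. integral {0..r0} (\<lambda>r. r^(m-1) / (s+r\<^sup>2) powr \<tau>)) at_top (at_right 0)"
proof -
  have taupos: "\<tau> > 0" using m tau by linarith
  define L where "L = (\<lambda>s::real. 2 powr (-\<tau>) * (ln r0 + (- ln s / 2)))"
  have "filterlim L at_top (at_right 0)"
  proof -
    have e: "L = (\<lambda>s. 2 powr (-\<tau>) * (ln r0 + (- ln s / 2)))"
      unfolding L_def by simp
    have lr: "filterlim (\<lambda>s::real. ln r0 + (- ln s / 2)) at_top (at_right 0)"
      by (rule filterlim_tendsto_add_at_top[OF tendsto_const lim1])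
    have "filterlim (\<lambda>s::real. 2 powr (-\<tau>) * (ln r0 + (- ln s / 2))) at_top (at_right 0)"
      by (rule filterlim_tendsto_pos_mult_at_top[OF tendsto_const _ lr]) simp
    thus ?thesis unfolding e .
  qed
  moreover have "eventually (\<lambda>s. L s \<le> integral {0..r0} (\<lambda>r. r^(m-1) / (s+r\<^sup>2) powr \<tau>)) (at_right 0)"
  proof -
    have "eventually (\<lambda>s::real. 0 < s \<and> s < r0\<^sup>2) (at_right 0)"
      using r0 by (intro eventually_conj eventually_at_right_less) (auto simp: eventually_at_right_field intro: exI[of _ "r0\<^sup>2"])
    thus ?thesis
    proof eventually_elim
      case (elim s)
      hence s: "0 < s" "s < r0\<^sup>2" by auto
      define g where "g = (\<lambda>r. r^(m-1) / (s+r\<^sup>2) powr \<tau>)"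
      have sp: "s + r\<^sup>2 > 0" for r using s by (simp add: add_pos_nonneg)
      have sp': "s + r\<^sup>2 \<noteq> 0" for r using sp[of r] by simp
      have sq: "0 < sqrt s" "sqrt s \<le> r0" using s r0 by (auto simp: real_sqrt_less_iff intro: real_less_lsqrt less_imp_le)
      have contg: "continuous_on {a..b} g" for a b
        unfolding g_def using s by (intro continuous_intros) (auto simp: sp sp')
      have gnn: "g r \<ge> 0" if "r \<ge> 0" for r unfolding g_def using that by simp
      have "integral {0..r0} g = integral {0..sqrt s} g + integral {sqrt s..r0} g"
        using Henstock_Kurzweil_Integration.integral_combine[where a=0 and c="sqrt s" and b=r0 and f=g,
               OF _ _ integrable_continuous_interval[OF contg]] sq by simp
      moreover have "integral {0..sqrt s} g \<ge> 0"
        by (rule integral_nonneg[OF integrable_continuous_interval[OF contg]]) (use gnn in auto)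
      moreover have "integral {sqrt s..r0} (\<lambda>r. 2 powr (-\<tau>) * (1/r)) \<le> integral {sqrt s..r0} g"
      proof (rule integral_le)
        show "(\<lambda>r. 2 powr (-\<tau>) * (1/r)) integrable_on {sqrt s..r0}"
          by (rule integrable_continuous_interval) (use sq in \<open>auto intro!: continuous_intros\<close>)
        show "g integrable_on {sqrt s..r0}" by (rule integrable_continuous_interval[OF contg])
        fix r assume r: "r \<in> {sqrt s..r0}"
        have r00: "r > 0" using sq(1) r by (meson atLeastAtMost_iff less_le_trans)
        hence rp: "r > 0" "r \<le> 1" "sqrt s \<le> r" using r r0 by auto
        have "(sqrt s)\<^sup>2 \<le> r\<^sup>2" by (rule power_mono) (use rp s in auto)
        hence sr: "s \<le> r\<^sup>2" using s by simp
        have "(s + r\<^sup>2) powr \<tau> \<le> (2 * r\<^sup>2) powr \<tau>"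
          by (rule powr_mono2) (use taupos s sr in auto)
        also have "\<dots> = 2 powr \<tau> * r powr (2*\<tau>)"
        proof -
          have "(2 * r\<^sup>2) powr \<tau> = 2 powr \<tau> * (r\<^sup>2) powr \<tau>" by (simp add: powr_mult)
          moreover have "r\<^sup>2 = r powr 2" using rp by (simp add: powr_realpow)
          moreover have "(r powr 2) powr \<tau> = r powr (2*\<tau>)" by (simp add: powr_powr)
          ultimately show ?thesis by simp
        qed
        also have "r powr (2*\<tau>) \<le> r powr (real m)"
          by (rule powr_mono') (use rp tau in auto)
        hence "2 powr \<tau> * r powr (2*\<tau>) \<le> 2 powr \<tau> * r ^ m"
          using rp by (simp add: powr_realpow)
        finally have A: "(s + r\<^sup>2) powr \<tau> \<le> 2 powr \<tau> * r ^ m" .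
        have Bp: "(s + r\<^sup>2) powr \<tau> > 0" using sp' by simp
        have "2 powr (-\<tau>) * (1/r) = r^(m-1) / (2 powr \<tau> * r ^ m)"
          using rp m by (simp add: powr_minus power_eq_if[of r m] field_simps)
        also have "\<dots> \<le> r^(m-1) / (s + r\<^sup>2) powr \<tau>"
          by (rule divide_left_mono[OF A]) (use rp Bp in auto)
        finally show "2 powr (-\<tau>) * (1/r) \<le> g r" unfolding g_def .
      qed
      moreover have "integral {sqrt s..r0} (\<lambda>r. 2 powr (-\<tau>) * (1/r)) = L s"
        unfolding L_def using int_inv[OF sq] s integral_mult_right[of "{sqrt s..r0}" "2 powr (-\<tau>)" "\<lambda>r. 1/r"]
        by (simp add: ln_sqrt del: integral_mult_right)
      ultimately show ?case unfolding g_def by linarith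
    qed
  qed
  ultimately show ?thesis by (rule filterlim_at_top_mono)
qed

lemma re_inv_powr:
  fixes w :: complex and \<tau> K :: real
  assumes re: "Re w > 0" and im: "\<bar>Im w\<bar> \<le> Re w / (2*\<tau>)" and tau: "\<tau> > 0"
    and K: "norm w \<le> K"
  shows "Re (1 / w powr complex_of_real \<tau>) \<ge> (1/2) / K powr \<tau>"
proof -
  have w0: "w \<noteq> 0" using re by auto
  define \<theta> where "\<theta> = Im (Ln w)"
  have th: "\<theta> = arctan (Im w / Re w)" unfolding \<theta>_def using arg_conv_arctan[OF re] Arg_eq_Im_Ln[OF w0] by simp
  have "\<bar>\<theta>\<bar> \<le> \<bar>Im w / Re w\<bar>" unfolding th by (rule abs_arctan_le)
  also have "\<dots> \<le> 1 / (2*\<tau>)" using im re tau by (simp add: abs_div pos_divide_le_eq field_simps)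
  finally have "\<bar>\<tau> * \<theta>\<bar> \<le> 1/2" using tau by (simp add: abs_mult field_simps)
  hence cosb: "cos (\<tau> * \<theta>) \<ge> 1/2"
  proof -
    assume a: "\<bar>\<tau> * \<theta>\<bar> \<le> 1/2"
    have "cos (pi/3) \<le> cos \<bar>\<tau> * \<theta>\<bar>"
      by (rule cos_monotone_0_pi_le) (use a pi_gt3 in auto)
    thus ?thesis by (simp add: cos_60)
  qed
  have "1 / w powr complex_of_real \<tau> = exp (- (complex_of_real \<tau> * Ln w))"
    using w0 by (simp add: powr_def exp_minus field_simps)
  hence "Re (1 / w powr complex_of_real \<tau>) = exp (- (\<tau> * ln (norm w))) * cos (\<tau> * \<theta>)"
    using w0 by (simp add: Re_exp \<theta>_def)
  also have "exp (- (\<tau> * ln (norm w))) = 1 / norm w powr \<tau>"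
    using w0 by (simp add: powr_def exp_minus field_simps)
  finally have eq: "Re (1 / w powr complex_of_real \<tau>) = cos (\<tau> * \<theta>) / norm w powr \<tau>" by simp
  have "norm w powr \<tau> \<le> K powr \<tau>" by (rule powr_mono2) (use tau K in auto)
  hence "1 / K powr \<tau> \<le> 1 / norm w powr \<tau>" using w0 by (simp add: frac_le)
  moreover have "1 / norm w powr \<tau> > 0" using w0 by simp
  ultimately have "(1/2) * (1 / K powr \<tau>) \<le> cos (\<tau> * \<theta>) * (1 / norm w powr \<tau>)"
    using cosb by (intro mult_mono) auto
  thus ?thesis unfolding eq by simp
qed

lemma smooth_cont: assumes "smooth_on S g" shows "continuous_on S g"
proof -
  have "\<forall>x\<in>S. g differentiable (at x within S)"
    using assms unfolding smooth_on_def by (metis fold_Nil id_apply)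
  thus ?thesis by (simp add: continuous_on_eq_continuous_within differentiable_imp_continuous_within)
qed

lemma ev_lt: "(c::real) > 0 \<Longrightarrow> eventually (\<lambda>x. x < c) (at_right 0)"
  unfolding eventually_at_right_field by (intro exI[of _ c]) auto

lemma isc: "continuous_on UNIV g \<Longrightarrow> isCont g x"
  using continuous_on_eq_continuous_at[of UNIV g] by auto

theorem mainTheorem6:
  fixes f :: "real \<times> (complex ^ 'n) \<Rightarrow> real"
    and h :: "complex ^ 'n \<Rightarrow> real"
    and a b :: "real \<times> (complex ^ 'n) \<Rightarrow> complex ^ 'n"
    and \<tau> :: real
  assumes f_smooth: "smooth_on UNIV f"
    and f_asym: "(\<lambda>(x, z). f (x, z) - norm z ^ 2)
                   \<in> O[at (0, 0)](\<lambda>(x, z). \<bar>x\<bar> * norm z + norm z ^ 3)"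
    and h_smooth: "smooth_on UNIV h"
    and h_asym: "h \<in> O[at 0](\<lambda>\<zeta>. norm \<zeta> ^ 3)"
    and a_smooth: "smooth_on ({0..} \<times> UNIV) a"
    and b_smooth: "smooth_on ({0..} \<times> UNIV) b"
    and tau_pos: "\<tau> > 0"
  defines "W \<equiv> (\<lambda>s \<zeta>. Complex (f (h \<zeta>, \<zeta>) + s * (1 + inner \<zeta> (b (s, \<zeta>))))
                                (- (h \<zeta> + s * inner \<zeta> (a (s, \<zeta>)))))"
  shows "\<exists>\<rho>>0. \<forall>r0. 0 < r0 \<and> r0 < \<rho> \<longrightarrow>
     (let J = (\<lambda>s. integral (ball 0 r0) (\<lambda>\<zeta>. 1 / (W s \<zeta> powr complex_of_real \<tau>))) in
       (\<exists>s1>0. \<forall>s \<zeta>. 0 \<le> s \<and> s < s1 \<and> norm \<zeta> < r0 \<and> (s, \<zeta>) \<noteq> (0, 0)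
                 \<longrightarrow> Re (W s \<zeta>) > 0)
     \<and> (\<exists>C'>0. \<exists>s0>0. \<forall>s. 0 < s \<and> s < s0 \<longrightarrow>
            Re (J s) \<ge> C' * integral {0..r0} (\<lambda>r. r ^ (2 * CARD('n) - 1) / (s + r\<^sup>2) powr \<tau>))
     \<and> (\<tau> \<ge> real CARD('n) \<longrightarrow> filterlim (\<lambda>s. Re (J s)) at_top (at_right 0)))"
proof -
  define D where "D = ({0..} \<times> UNIV :: (real \<times> (complex^'n)) set)"
  have fc: "continuous_on UNIV f" by (rule smooth_cont[OF f_smooth])
  have hc: "continuous_on UNIV h" by (rule smooth_cont[OF h_smooth])
  have ac: "continuous_on D a" unfolding D_def by (rule smooth_cont[OF a_smooth])
  have bc: "continuous_on D b" unfolding D_def by (rule smooth_cont[OF b_smooth])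
  from f_asym obtain cf where cf: "cf > 0" and evf0:
    "eventually (\<lambda>p. norm ((\<lambda>(x, z). f (x, z) - norm z ^ 2) p)
        \<le> cf * norm ((\<lambda>(x, z). \<bar>x\<bar> * norm z + norm z ^ 3) p)) (at (0::real, 0::complex^'n))"
    by (elim landau_o.bigE)
  have evf: "eventually (\<lambda>p. norm (f p - norm (snd p) ^ 2)
        \<le> cf * (\<bar>fst p\<bar> * norm (snd p) + norm (snd p) ^ 3)) (at (0::real, 0::complex^'n))"
    using evf0 by eventually_elim (auto simp: case_prod_beta)
  have f00: "f (0,0) = 0"
  proof -
    have "((\<lambda>p::real \<times> (complex^'n). cf * (\<bar>fst p\<bar> * norm (snd p) + norm (snd p) ^ 3))
           \<longlongrightarrow> cf * (\<bar>fst (0::real, 0::complex^'n)\<bar> * norm (snd (0::real, 0::complex^'n))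
                 + norm (snd (0::real, 0::complex^'n)) ^ 3)) (at (0,0))"
      by (intro tendsto_intros tendsto_ident_at)
    hence t1: "((\<lambda>p::real \<times> (complex^'n). cf * (\<bar>fst p\<bar> * norm (snd p) + norm (snd p) ^ 3)) \<longlongrightarrow> 0) (at (0,0))"
      by simp
    have t2: "((\<lambda>p. f p - norm (snd p) ^ 2) \<longlongrightarrow> 0) (at (0::real, 0::complex^'n))"
      by (rule Lim_null_comparison[OF evf t1])
    have "((\<lambda>p::real \<times> (complex^'n). norm (snd p) ^ 2) \<longlongrightarrow> norm (snd (0::real, 0::complex^'n)) ^ 2) (at (0,0))"
      by (intro tendsto_intros tendsto_ident_at)
    hence t3: "((\<lambda>p::real \<times> (complex^'n). norm (snd p) ^ 2) \<longlongrightarrow> 0) (at (0,0))" by simp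
    have "((\<lambda>p. (f p - norm (snd p) ^ 2) + norm (snd p) ^ 2) \<longlongrightarrow> 0 + 0) (at (0::real, 0::complex^'n))"
      by (rule tendsto_add[OF t2 t3])
    hence t4: "(f \<longlongrightarrow> 0) (at (0::real, 0::complex^'n))" by simp
    have "(f \<longlongrightarrow> f (0,0)) (at (0::real, 0::complex^'n))" using isc[OF fc] by (simp add: isCont_def)
    from tendsto_unique[OF at_neq_bot this t4] show ?thesis .
  qed
  obtain df where df: "df > 0" and fd: "\<And>p. p \<noteq> (0,0) \<Longrightarrow> dist p (0::real, 0::complex^'n) < df \<Longrightarrow>
      norm (f p - norm (snd p) ^ 2) \<le> cf * (\<bar>fst p\<bar> * norm (snd p) + norm (snd p) ^ 3)"
    using evf unfolding eventually_at by auto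
  have fb: "\<bar>f (x,z) - norm z ^ 2\<bar> \<le> cf * (\<bar>x\<bar> * norm z + norm z ^ 3)"
    if "\<bar>x\<bar> < df/2" "norm z < df/2" for x z
  proof (cases "(x,z) = (0,0)")
    case True thus ?thesis using f00 by auto
  next
    case False
    have "dist (x,z) (0,0) \<le> \<bar>x\<bar> + norm z" using norm_Pair_le[of x z] by (simp add: dist_norm)
    also have "\<dots> < df" using that by simp
    finally show ?thesis using fd[OF False] by simp
  qed
  from h_asym obtain ch where ch: "ch > 0" and evh0:
    "eventually (\<lambda>\<zeta>. norm (h \<zeta>) \<le> ch * norm (norm \<zeta> ^ 3)) (at (0::complex^'n))"
    by (elim landau_o.bigE)
  have evh: "eventually (\<lambda>\<zeta>. norm (h \<zeta>) \<le> ch * norm \<zeta> ^ 3) (at (0::complex^'n))"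
    using evh0 by eventually_elim simp
  have h0: "h 0 = 0"
  proof -
    have "((\<lambda>\<zeta>::complex^'n. ch * norm \<zeta> ^ 3) \<longlongrightarrow> ch * norm (0::complex^'n) ^ 3) (at 0)"
      by (intro tendsto_intros tendsto_ident_at)
    hence "((\<lambda>\<zeta>::complex^'n. ch * norm \<zeta> ^ 3) \<longlongrightarrow> 0) (at 0)" by simp
    from Lim_null_comparison[OF evh this] have t: "(h \<longlongrightarrow> 0) (at (0::complex^'n))" .
    have "(h \<longlongrightarrow> h 0) (at (0::complex^'n))" using isc[OF hc] by (simp add: isCont_def)
    from tendsto_unique[OF at_neq_bot this t] show ?thesis .
  qed
  obtain dh where dh: "dh > 0" and hd: "\<And>\<zeta>. \<zeta> \<noteq> 0 \<Longrightarrow> dist \<zeta> (0::complex^'n) < dh \<Longrightarrow>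
      norm (h \<zeta>) \<le> ch * norm \<zeta> ^ 3"
    using evh unfolding eventually_at by auto
  have hb: "\<bar>h \<zeta>\<bar> \<le> ch * norm \<zeta> ^ 3" if "norm \<zeta> < dh" for \<zeta>
    using hd[of \<zeta>] that h0 by (cases "\<zeta> = 0") auto
  have D0: "(0::real, 0::complex^'n) \<in> D" unfolding D_def by auto
  obtain da where da: "da > 0" and dad: "\<And>p. p \<in> D \<Longrightarrow> dist p (0,0) < da \<Longrightarrow> dist (a p) (a (0,0)) < 1"
    using ac D0 unfolding continuous_on_iff by (meson zero_less_one)
  obtain db where db: "db > 0" and dbd: "\<And>p. p \<in> D \<Longrightarrow> dist p (0,0) < db \<Longrightarrow> dist (b p) (b (0,0)) < 1"
    using bc D0 unfolding continuous_on_iff by (meson zero_less_one)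
  define A where "A = norm (a (0,0)) + 1"
  define B where "B = norm (b (0,0)) + 1"
  have A1: "A \<ge> 1" and B1: "B \<ge> 1" unfolding A_def B_def by auto
  have ab: "norm (a (s,\<zeta>)) \<le> A" if "0 \<le> s" "s < da/2" "norm \<zeta> < da/2" for s \<zeta>
  proof -
    have "dist (s,\<zeta>) (0,0) \<le> \<bar>s\<bar> + norm \<zeta>" using norm_Pair_le[of s \<zeta>] by (simp add: dist_norm)
    also have "\<dots> < da" using that by simp
    finally have "dist (a (s,\<zeta>)) (a (0,0)) < 1" using dad[of "(s,\<zeta>)"] that by (auto simp: D_def)
    thus ?thesis unfolding A_def using norm_triangle_sub[of "a (s,\<zeta>)" "a (0,0)"] by (simp add: dist_norm)
  qed
  have bb: "norm (b (s,\<zeta>)) \<le> B" if "0 \<le> s" "s < db/2" "norm \<zeta> < db/2" for s \<zeta>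
  proof -
    have "dist (s,\<zeta>) (0,0) \<le> \<bar>s\<bar> + norm \<zeta>" using norm_Pair_le[of s \<zeta>] by (simp add: dist_norm)
    also have "\<dots> < db" using that by simp
    finally have "dist (b (s,\<zeta>)) (b (0,0)) < 1" using dbd[of "(s,\<zeta>)"] that by (auto simp: D_def)
    thus ?thesis unfolding B_def using norm_triangle_sub[of "b (s,\<zeta>)" "b (0,0)"] by (simp add: dist_norm)
  qed
  define M where "M = max ch A"
  have M: "M \<ge> ch" "M \<ge> A" "M > 0" using ch A1 unfolding M_def by auto
  define K1 where "K1 = cf * (ch + 1)"
  have K1: "K1 > 0" unfolding K1_def using cf ch by simp
  have "eventually (\<lambda>x. 0 < x \<and> x < 1 \<and> x < dh \<and> x < df/2 \<and> x < df/(2*ch) \<and> x < da/2 \<and> x < db/2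
           \<and> x < 1/(2*K1) \<and> x < 1/(2*B) \<and> x < 1/(4*M) \<and> x < 1/(4*M*\<tau>)) (at_right (0::real))"
    using dh df ch da db K1 B1 M tau_pos
    by (intro eventually_conj ev_lt eventually_at_right_less) auto
  from eventually_happens[OF this] obtain \<delta> where del: "0 < \<delta>" "\<delta> < 1" "\<delta> < dh" "\<delta> < df/2"
     "\<delta> < df/(2*ch)" "\<delta> < da/2" "\<delta> < db/2" "\<delta> < 1/(2*K1)" "\<delta> < 1/(2*B)" "\<delta> < 1/(4*M)"
     "\<delta> < 1/(4*M*\<tau>)"
    by auto
  have chd: "ch * \<delta> < df/2" using del(5) ch by (simp add: field_simps)
  have K1d: "K1 * \<delta> < 1/2" using del(8) K1 by (simp add: field_simps)
  have Bd: "B * \<delta> < 1/2" using del(9) B1 by (simp add: field_simps)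
  have Md: "M * \<delta> < 1/4" using del(10) M by (simp add: field_simps)
  have Mtd: "M * \<delta> * \<tau> < 1/4" using del(11) M tau_pos by (simp add: field_simps)
  have est: "Re (W s \<zeta>) \<ge> (norm \<zeta> ^ 2 + s) / 2 \<and> \<bar>Im (W s \<zeta>)\<bar> \<le> M * \<delta> * (norm \<zeta> ^ 2 + s)
             \<and> norm (W s \<zeta>) \<le> 2 * (norm \<zeta> ^ 2 + s)"
    if s: "0 \<le> s" "s < \<delta>" and z: "norm \<zeta> < \<delta>" for s \<zeta>
  proof -
    define r where "r = norm \<zeta>"
    have r: "0 \<le> r" "r < \<delta>" "r < 1" using z del unfolding r_def by auto
    have rr: "r * r \<le> 1" using r by (simp add: mult_le_one)
    have r3: "r ^ 3 \<le> r"
    proof -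
      have "r ^ 3 = r * (r * r)" by (simp add: power3_eq_cube)
      also have "\<dots> \<le> r * 1" using rr r by (intro mult_left_mono) auto
      finally show ?thesis by simp
    qed
    have hz: "\<bar>h \<zeta>\<bar> \<le> ch * r ^ 3" using hb[of \<zeta>] z del unfolding r_def by auto
    have hz2: "\<bar>h \<zeta>\<bar> < df/2"
    proof -
      have "ch * r ^ 3 \<le> ch * \<delta>" using r3 r ch by (intro mult_left_mono) auto
      thus ?thesis using hz chd by linarith
    qed
    have fz: "\<bar>f (h \<zeta>, \<zeta>) - r ^ 2\<bar> \<le> cf * (\<bar>h \<zeta>\<bar> * r + r ^ 3)"
      using fb[OF hz2] z del unfolding r_def by auto
    have "\<bar>h \<zeta>\<bar> * r \<le> ch * r ^ 3 * 1" using hz r r by (intro mult_mono) auto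
    hence "cf * (\<bar>h \<zeta>\<bar> * r + r ^ 3) \<le> cf * (ch * r ^ 3 + r ^ 3)" using cf by (intro mult_left_mono) auto
    also have "\<dots> = K1 * r ^ 3" unfolding K1_def by (simp add: algebra_simps)
    also have "\<dots> = (K1 * r) * r ^ 2" by (simp add: power2_eq_square power3_eq_cube)
    also have "\<dots> \<le> (K1 * \<delta>) * r ^ 2" using K1 r by (intro mult_right_mono mult_left_mono) auto
    also have "\<dots> \<le> (1/2) * r ^ 2" using K1d by (intro mult_right_mono) auto
    finally have fz2: "\<bar>f (h \<zeta>, \<zeta>) - r ^ 2\<bar> \<le> r ^ 2 / 2" using fz by simp
    have ib: "\<bar>inner \<zeta> (b (s, \<zeta>))\<bar> \<le> 1/2"
    proof -
      have "\<bar>inner \<zeta> (b (s, \<zeta>))\<bar> \<le> norm \<zeta> * norm (b (s, \<zeta>))" by (rule Cauchy_Schwarz_ineq2)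
      also have "\<dots> \<le> \<delta> * B" using bb[of s \<zeta>] s z del by (intro mult_mono) auto
      finally show ?thesis using Bd by (simp add: mult.commute)
    qed
    have ia: "\<bar>inner \<zeta> (a (s, \<zeta>))\<bar> \<le> \<delta> * A"
    proof -
      have "\<bar>inner \<zeta> (a (s, \<zeta>))\<bar> \<le> norm \<zeta> * norm (a (s, \<zeta>))" by (rule Cauchy_Schwarz_ineq2)
      also have "\<dots> \<le> \<delta> * A" using ab[of s \<zeta>] s z del by (intro mult_mono) auto
      finally show ?thesis .
    qed
    have ReW: "Re (W s \<zeta>) = f (h \<zeta>, \<zeta>) + s * (1 + inner \<zeta> (b (s, \<zeta>)))" unfolding W_def by simp
    have ImW: "Im (W s \<zeta>) = - (h \<zeta> + s * inner \<zeta> (a (s, \<zeta>)))" unfolding W_def by simp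
    have sb1: "s * (1/2) \<le> s * (1 + inner \<zeta> (b (s, \<zeta>)))" using ib s by (intro mult_left_mono) auto
    have sb2: "s * (1 + inner \<zeta> (b (s, \<zeta>))) \<le> s * (3/2)" using ib s by (intro mult_left_mono) auto
    have fl: "f (h \<zeta>, \<zeta>) \<ge> r ^ 2 / 2" and fu: "f (h \<zeta>, \<zeta>) \<le> 3 * r ^ 2 / 2"
      using fz2 abs_le_iff[of "f (h \<zeta>, \<zeta>) - r ^ 2" "r ^ 2 / 2"] by linarith+
    have E1: "Re (W s \<zeta>) \<ge> (r ^ 2 + s) / 2" unfolding ReW using fl sb1 by simp
    have E1': "Re (W s \<zeta>) \<le> 3 * (r ^ 2 + s) / 2" unfolding ReW using fu sb2 by simp
    have "\<bar>Im (W s \<zeta>)\<bar> \<le> \<bar>h \<zeta>\<bar> + s * \<bar>inner \<zeta> (a (s, \<zeta>))\<bar>"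
    proof -
      have "\<bar>s * inner \<zeta> (a (s, \<zeta>))\<bar> = s * \<bar>inner \<zeta> (a (s, \<zeta>))\<bar>" using s by (simp add: abs_mult)
      moreover have "\<bar>Im (W s \<zeta>)\<bar> \<le> \<bar>h \<zeta>\<bar> + \<bar>s * inner \<zeta> (a (s, \<zeta>))\<bar>"
        unfolding ImW using abs_triangle_ineq[of "h \<zeta>" "s * inner \<zeta> (a (s, \<zeta>))"] by simp
      ultimately show ?thesis by simp
    qed
    also have "\<dots> \<le> ch * r ^ 3 + s * (\<delta> * A)" using hz ia s by (intro add_mono mult_left_mono) auto
    also have "\<dots> \<le> M * \<delta> * r ^ 2 + M * \<delta> * s"
    proof (rule add_mono)
      have "ch * r ^ 3 = ch * r * r ^ 2" by (simp add: power2_eq_square power3_eq_cube)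
      also have "\<dots> \<le> M * \<delta> * r ^ 2" using M r ch by (intro mult_right_mono mult_mono) auto
      finally show "ch * r ^ 3 \<le> M * \<delta> * r ^ 2" .
      have "s * (\<delta> * A) = A * \<delta> * s" by simp
      also have "\<dots> \<le> M * \<delta> * s" using M s del by (intro mult_right_mono) auto
      finally show "s * (\<delta> * A) \<le> M * \<delta> * s" .
    qed
    finally have E2: "\<bar>Im (W s \<zeta>)\<bar> \<le> M * \<delta> * (r ^ 2 + s)" by (simp add: algebra_simps)
    have "M * \<delta> * (r ^ 2 + s) \<le> (1/4) * (r ^ 2 + s)" using Md r s by (intro mult_right_mono) auto
    hence "norm (W s \<zeta>) \<le> 2 * (r ^ 2 + s)" using cmod_le[of "W s \<zeta>"] E1 E1' E2 by linarith
    thus ?thesis using E1 E2 unfolding r_def by auto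
  qed
  have Wpos: "Re (W s \<zeta>) > 0" if "0 \<le> s" "s < \<delta>" "norm \<zeta> < \<delta>" "(s,\<zeta>) \<noteq> (0,0)" for s \<zeta>
  proof -
    have "norm \<zeta> ^ 2 + s > 0"
    proof (cases "s = 0")
      case True thus ?thesis using that by auto
    next
      case False thus ?thesis using that by (simp add: add_nonneg_pos)
    qed
    moreover have "(norm \<zeta> ^ 2 + s) / 2 \<le> Re (W s \<zeta>)" using est[OF that(1-3)] by blast
    ultimately show ?thesis by (meson half_gt_zero less_le_trans)
  qed
  have Wcont: "continuous_on UNIV (W s)" if s: "0 \<le> s" for s
  proof -
    have c1: "continuous_on UNIV (\<lambda>\<zeta>. f (h \<zeta>, \<zeta>))"
      by (rule continuous_on_compose2[OF fc]) (auto intro!: continuous_intros hc)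
    have c2: "continuous_on UNIV (\<lambda>\<zeta>. b (s, \<zeta>))"
      by (rule continuous_on_compose2[OF bc]) (use s in \<open>auto intro!: continuous_intros simp: D_def\<close>)
    have c3: "continuous_on UNIV (\<lambda>\<zeta>. a (s, \<zeta>))"
      by (rule continuous_on_compose2[OF ac]) (use s in \<open>auto intro!: continuous_intros simp: D_def\<close>)
    have e: "W s = (\<lambda>\<zeta>. complex_of_real (f (h \<zeta>, \<zeta>) + s * (1 + inner \<zeta> (b (s, \<zeta>))))
                 + \<i> * complex_of_real (- (h \<zeta> + s * inner \<zeta> (a (s, \<zeta>)))))"
      unfolding W_def by (simp add: Complex_eq fun_eq_iff)
    show ?thesis unfolding e by (intro continuous_intros c1 c2 c3 hc)
  qed
  define c3 where "c3 = (1/2) / 2 powr \<tau>"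
  have c3pos: "c3 > 0" unfolding c3_def by simp
  have pl: "Re (1 / (W s \<zeta> powr complex_of_real \<tau>)) \<ge> c3 * (1 / (s + norm \<zeta> ^ 2) powr \<tau>)"
    if "0 < s" "s < \<delta>" "norm \<zeta> < \<delta>" for s \<zeta>
  proof -
    have "0 \<le> s" using that by simp
    from est[OF this that(2,3)] have e1: "(norm \<zeta> ^ 2 + s) / 2 \<le> Re (W s \<zeta>)"
      and e2: "\<bar>Im (W s \<zeta>)\<bar> \<le> M * \<delta> * (norm \<zeta> ^ 2 + s)"
      and e3: "norm (W s \<zeta>) \<le> 2 * (norm \<zeta> ^ 2 + s)" by auto
    note e = e1 e2 e3
    have q: "norm \<zeta> ^ 2 + s > 0" using that by (simp add: add_nonneg_pos)
    have "M * \<delta> * (norm \<zeta> ^ 2 + s) \<le> (1 / (4 * \<tau>)) * (norm \<zeta> ^ 2 + s)"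
      using Mtd tau_pos q by (intro mult_right_mono) (auto simp: field_simps)
    also have "\<dots> = ((norm \<zeta> ^ 2 + s) / 2) / (2 * \<tau>)" by (simp add: field_simps)
    also have "\<dots> \<le> Re (W s \<zeta>) / (2 * \<tau>)" by (rule divide_right_mono[OF e1]) (use tau_pos in simp)
    finally have im: "\<bar>Im (W s \<zeta>)\<bar> \<le> Re (W s \<zeta>) / (2 * \<tau>)" using e that by linarith
    have re: "Re (W s \<zeta>) > 0" using e1 q by (meson half_gt_zero less_le_trans)
    have "(1/2) / (2 * (norm \<zeta> ^ 2 + s)) powr \<tau> \<le> Re (1 / (W s \<zeta> powr complex_of_real \<tau>))"
      by (rule re_inv_powr[OF re im tau_pos]) (use e that in auto)
    moreover have "(2 * (norm \<zeta> ^ 2 + s)) powr \<tau> = 2 powr \<tau> * (s + norm \<zeta> ^ 2) powr \<tau>"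
      using q powr_mult[of 2 "s + norm \<zeta> ^ 2" \<tau>] by (simp add: add.commute del: distrib_left_numeral)
    ultimately show ?thesis unfolding c3_def by simp
  qed
  define \<omega> where "\<omega> = unit_ball_vol (real (2 * CARD('n)))"
  have om: "\<omega> > 0" unfolding \<omega>_def by simp
  define C' where "C' = c3 * (\<omega> / 4 powr \<tau>)"
  have C'pos: "C' > 0" unfolding C'_def using c3pos om by simp
  show ?thesis
  proof (intro exI[of _ \<delta>] conjI allI impI)
    show "\<delta> > 0" by (rule del(1))
    fix r0 assume r0: "0 < r0 \<and> r0 < \<delta>"
    define J where "J = (\<lambda>s. integral (ball 0 r0) (\<lambda>\<zeta>. 1 / (W s \<zeta> powr complex_of_real \<tau>)))"
    define I where "I = (\<lambda>s. integral {0..r0} (\<lambda>r. r ^ (2 * CARD('n) - 1) / (s + r\<^sup>2) powr \<tau>))"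
    have key: "C' * I s \<le> Re (J s)" if s: "0 < s" "s < \<delta>" for s
    proof -
      have sp: "s + norm \<zeta> ^ 2 > 0" for \<zeta> :: "complex^'n" using s by (simp add: add_pos_nonneg)
      have Wc: "continuous_on (cball 0 r0) (W s)"
        using Wcont[of s] s by (auto intro: continuous_on_subset)
      have Wp: "Re (W s \<zeta>) > 0" if "\<zeta> \<in> cball 0 r0" for \<zeta>
        using Wpos[of s \<zeta>] that s r0 by auto
      have pc: "continuous_on (cball 0 r0) (\<lambda>\<zeta>. W s \<zeta> powr complex_of_real \<tau>)"
        by (rule continuous_on_powr_complex) (use Wp Wc tau_pos in \<open>auto intro: less_imp_le continuous_intros\<close>)
      have cont: "continuous_on (cball 0 r0) (\<lambda>\<zeta>. 1 / (W s \<zeta> powr complex_of_real \<tau>))"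
        by (rule continuous_on_divide[OF continuous_on_const pc]) (use Wp in fastforce)
      have Intc: "(\<lambda>\<zeta>. 1 / (W s \<zeta> powr complex_of_real \<tau>)) integrable_on ball 0 r0"
        by (rule cont_int[OF _ cont]) auto
      have ReJ: "Re (J s) = integral (ball 0 r0) (\<lambda>\<zeta>. Re (1 / (W s \<zeta> powr complex_of_real \<tau>)))"
        unfolding J_def using integral_linear[OF Intc bounded_linear_Re] by (simp add: o_def)
      have IntRe: "(\<lambda>\<zeta>. Re (1 / (W s \<zeta> powr complex_of_real \<tau>))) integrable_on ball 0 r0"
        using integrable_linear[OF Intc bounded_linear_Re] by (simp add: o_def)
      have contphi: "continuous_on (cball 0 r0) (\<lambda>\<zeta>::complex^'n. c3 * (1 / (s + norm \<zeta> ^ 2) powr \<tau>))"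
      proof -
        have sp': "s + norm \<zeta> ^ 2 \<noteq> 0" for \<zeta> :: "complex^'n" using sp[of \<zeta>] by simp
        show ?thesis by (intro continuous_intros) (auto simp: sp')
      qed
      have Intphi: "(\<lambda>\<zeta>::complex^'n. c3 * (1 / (s + norm \<zeta> ^ 2) powr \<tau>)) integrable_on ball 0 r0"
        by (rule cont_int[OF _ contphi]) auto
      have "integral (ball 0 r0) (\<lambda>\<zeta>::complex^'n. c3 * (1 / (s + norm \<zeta> ^ 2) powr \<tau>))
            \<le> integral (ball 0 r0) (\<lambda>\<zeta>. Re (1 / (W s \<zeta> powr complex_of_real \<tau>)))"
        by (rule integral_le[OF Intphi IntRe]) (use pl s r0 in auto)
      hence G: "c3 * integral (ball 0 r0) (\<lambda>\<zeta>::complex^'n. 1 / (s + norm \<zeta> ^ 2) powr \<tau>) \<le> Re (J s)"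
        unfolding ReJ using integral_mult_right[of "ball 0 r0" c3 "\<lambda>\<zeta>::complex^'n. 1 / (s + norm \<zeta> ^ 2) powr \<tau>"]
        by (simp del: integral_mult_right)
      have rad: "\<omega> / 4 powr \<tau> * I s \<le> integral (ball (0::complex^'n) r0) (\<lambda>\<zeta>. 1 / (s + norm \<zeta> ^ 2) powr \<tau>)"
        using radial_cmp[where 'a="complex^'n", OF s(1) tau_pos, of r0] r0 unfolding \<omega>_def I_def by (simp add: mult.commute)
      have "C' * I s = c3 * (\<omega> / 4 powr \<tau> * I s)" unfolding C'_def by simp
      also have "\<dots> \<le> c3 * integral (ball (0::complex^'n) r0) (\<lambda>\<zeta>. 1 / (s + norm \<zeta> ^ 2) powr \<tau>)"
        using rad c3pos by (intro mult_left_mono) auto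
      finally show ?thesis using G by linarith
    qed
    show "let J = (\<lambda>s. integral (ball 0 r0) (\<lambda>\<zeta>. 1 / (W s \<zeta> powr complex_of_real \<tau>))) in
       (\<exists>s1>0. \<forall>s \<zeta>. 0 \<le> s \<and> s < s1 \<and> norm \<zeta> < r0 \<and> (s, \<zeta>) \<noteq> (0, 0)
                 \<longrightarrow> Re (W s \<zeta>) > 0)
     \<and> (\<exists>C'>0. \<exists>s0>0. \<forall>s. 0 < s \<and> s < s0 \<longrightarrow>
            Re (J s) \<ge> C' * integral {0..r0} (\<lambda>r. r ^ (2 * CARD('n) - 1) / (s + r\<^sup>2) powr \<tau>))
     \<and> (\<tau> \<ge> real CARD('n) \<longrightarrow> filterlim (\<lambda>s. Re (J s)) at_top (at_right 0))"
      unfolding Let_def J_def[symmetric]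
    proof (intro conjI impI)
      show "\<exists>s1>0. \<forall>s \<zeta>. 0 \<le> s \<and> s < s1 \<and> norm \<zeta> < r0 \<and> (s, \<zeta>) \<noteq> (0, 0) \<longrightarrow> Re (W s \<zeta>) > 0"
        using Wpos r0 by (intro exI[of _ \<delta>]) (auto simp: del(1))
      show "\<exists>C'>0. \<exists>s0>0. \<forall>s. 0 < s \<and> s < s0 \<longrightarrow>
            Re (J s) \<ge> C' * integral {0..r0} (\<lambda>r. r ^ (2 * CARD('n) - 1) / (s + r\<^sup>2) powr \<tau>)"
        using key C'pos del(1) unfolding I_def by blast
      assume tn: "\<tau> \<ge> real CARD('n)"
      have "filterlim I at_top (at_right 0)" unfolding I_def
        by (rule I_diverge) (use r0 del tn in auto)
      hence "filterlim (\<lambda>s. C' * I s) at_top (at_right 0)"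
        by (rule filterlim_tendsto_pos_mult_at_top[OF tendsto_const C'pos])
      moreover have "eventually (\<lambda>s. C' * I s \<le> Re (J s)) (at_right 0)"
      proof -
        have "eventually (\<lambda>s::real. 0 < s \<and> s < \<delta>) (at_right 0)"
          using del(1) by (intro eventually_conj ev_lt eventually_at_right_less)
        thus ?thesis by eventually_elim (use key in auto)
      qed
      ultimately show "filterlim (\<lambda>s. Re (J s)) at_top (at_right 0)"
        by (rule filterlim_at_top_mono)
    qed
  qed
qed

end
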